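(* Let $\mathbb{H}$ be a finite-dimensional complex Hilbert space and $t\mapsto H(t)$ a continuous family of self-adjoint operators with propagator $\{U(t,s)\}$ (unitaries with $U(t,t)=I$, $U(t,r)U(r,s)=U(t,s)$, $\mathrm{i}\frac{d}{dt}U(t,s)=H(t)U(t,s)$). Let $X_0=\sum_{j=1}^n\lambda_jE_j$ be self-adjoint with distinct eigenvalues and spectral projections $E_j$, with $U(0,T)E_jU(T,0)=E_j$ for all $j$ for some $T>0$. For each $j$ let $\{\psi^{(j)}_k\}_{k=1}^{d_j}$ be an orthonormal basis of $E_j[\mathbb{H}]$, $\psi^{(j)}_k(t)=U(0,t)\psi^{(j)}_k$, $\mathbb{H}_j(t)=U(0,t)E_jU(t,0)[\mathbb{H}]$, $\tilde V_j(t)=[\tilde v^{(j)}_{mk}(t)]$ the solution of $\mathrm{i}\frac{d}{dt}\tilde V_j=C_j\tilde V_j$, $\tilde V_j(0)=I_{d_j}$, where $C_j(t)=[\langle\psi^{(j)}_m,H(t)\psi^{(j)}_k\rangle]_{m,k}$, and $\tilde\psi^{(j)}_k(t)=\sum_m\tilde v^{(j)}_{mk}(t)\psi^{(j)}_m(t)$. Let $\{\bar\psi^{(j)}_k(t)\}_{k}$ be, for each $t\in[0,T]$, an orthonormal basis of $\mathbb{H}_j(t)$, continuously differentiable in $t$, with $\bar\psi^{(j)}_k(T)=\bar\psi^{(j)}_k(0)=\psi^{(j)}_k$. Set $\tilde U(t)=\sum_j\sum_k|\tilde\psi^{(j)}_k(t)\rangle\langle\psi^{(j)}_k|$, $\bar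 U(t)=\sum_j\sum_k|\bar\psi^{(j)}_k(t)\rangle\langle\psi^{(j)}_k|$, and let $\mathbf{C}_W:[0,T]\ni t\mapsto W(t)=\Pi(\bar U(t))$, where $\Pi$ is the quotient map for the partitioned orthonormal basis $O_0=\{\psi^{(j)}_k\}$ with blocks $Q^{(j)}_0=\{\psi^{(j)}_k:1\le k\le d_j\}$. Then $t\mapsto\tilde U(t)$ is the horizontal lift of $\mathbf{C}_W$ with respect to the canonical connection $\check\Omega$; that is, $\tilde U$ is a smooth curve in $\mathcal{U}(\mathbb{H})$ with $\Pi(\tilde U(t))=W(t)$ and $\check\Omega_{\tilde U(t)}\big(\frac{d\tilde U(t)}{dt}\big)=0$ for all $t\in[0,T]$.
   Context: $\mathcal{G}$ denotes the group of unitaries block diagonal with respect to the partition $O_0=\bigcup_jQ^{(j)}_0$ (i.e. of the form $\sum_j\sum_{m,k}u^{(j)}_{mk}|\psi^{(j)}_m\rangle\langle\psi^{(j)}_k|$ with unitary blocks), $\mathcal{W}=\{U\mathcal{G}:U\in\mathcal{U}(\mathbb{H})\}$, and $\Pi(U)=U\mathcal{G}$. For $P\in\mathcal{U}(\mathbb{H})$ and $Q$ a tangent vector at $P$ (derivative at $0$ of a differentiable curve in $\mathcal{U}(\mathbb{H})$ through $P$), the canonical connection is $\check\Omega_P(Q)=\sum_{j=1}^n\sum_{m,k=1}^{d_j}\langle\psi^{(j)}_m,P^{-1}Q\psi^{(j)}_k\rangle|\psi^{(j)}_m\rangle\langle\psi^{(j)}_k|$. Inner products are linear in the second argument. *)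

theory Defs
  imports "HOL-Analysis.Analysis"
begin

text \<open>The finite-dimensional Hilbert space is modelled as complex^'n ('n finite);
operators are matrices complex^'n^'n acting by *v.\<close>

definition cinner :: "complex^'n \<Rightarrow> complex^'n \<Rightarrow> complex" where
  "cinner x y = (\<Sum>i\<in>UNIV. cnj (x$i) * y$i)"

definition adj :: "complex^'n^'n \<Rightarrow> complex^'n^'n" where
  "adj M = (\<chi> i j. cnj (M$j$i))"

definition unitary :: "complex^'n^'n \<Rightarrow> bool" where
  "unitary M \<longleftrightarrow> adj M ** M = mat 1 \<and> M ** adj M = mat 1"

definition self_adjoint :: "complex^'n^'n \<Rightarrow> bool" where
  "self_adjoint M \<longleftrightarrow> adj M = M"

definition cmscale :: "complex \<Rightarrow> complex^'n^'n \<Rightarrow> complex^'n^'n" where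
  "cmscale c M = (\<chi> i j. c * M$i$j)"

definition ketbra :: "complex^'n \<Rightarrow> complex^'n \<Rightarrow> complex^'n^'n" where
  "ketbra a b = (\<chi> i l. a$i * cnj (b$l))"

definition op_range :: "complex^'n^'n \<Rightarrow> (complex^'n) set" where
  "op_range M = {M *v y | y. True}"

definition onb_of :: "(complex^'n) set \<Rightarrow> (nat \<Rightarrow> complex^'n) \<Rightarrow> nat \<Rightarrow> bool" where
  "onb_of S v m \<longleftrightarrow>
     (\<forall>k<m. \<forall>l<m. cinner (v k) (v l) = (if k = l then 1 else 0)) \<and>
     (\<forall>k<m. v k \<in> S) \<and>
     (\<forall>x\<in>S. \<exists>c. x = (\<Sum>k<m. c k *s v k))"

text \<open>The group G of unitaries block diagonal w.r.t. the partitioned ONB psi (blocks j < n,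
block j = {psi j k | k < d j}).\<close>
definition blockG :: "nat \<Rightarrow> (nat \<Rightarrow> nat) \<Rightarrow> (nat \<Rightarrow> nat \<Rightarrow> complex^'n) \<Rightarrow> (complex^'n^'n) set" where
  "blockG n d psi =
     {(\<Sum>j<n. \<Sum>m<d j. \<Sum>k<d j. cmscale (u j m k) (ketbra (psi j m) (psi j k))) | u.
        \<forall>j<n. (\<forall>m<d j. \<forall>k<d j.
                 (\<Sum>l<d j. cnj (u j l m) * u j l k) = (if m = k then 1 else 0)) \<and>
               (\<forall>m<d j. \<forall>k<d j.
                 (\<Sum>l<d j. u j m l * cnj (u j k l)) = (if m = k then 1 else 0))}"

definition Pi_quot :: "nat \<Rightarrow> (nat \<Rightarrow> nat) \<Rightarrow> (nat \<Rightarrow> nat \<Rightarrow> complex^'n) \<Rightarrow> complex^'n^'n \<Rightarrow> (complex^'n^'n) set" where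
  "Pi_quot n d psi U = {U ** g | g. g \<in> blockG n d psi}"

definition can_conn :: "nat \<Rightarrow> (nat \<Rightarrow> nat) \<Rightarrow> (nat \<Rightarrow> nat \<Rightarrow> complex^'n) \<Rightarrow> complex^'n^'n \<Rightarrow> complex^'n^'n \<Rightarrow> complex^'n^'n" where
  "can_conn n d psi P Q =
     (\<Sum>j<n. \<Sum>m<d j. \<Sum>k<d j.
        cmscale (cinner (psi j m) ((matrix_inv P ** Q) *v psi j k)) (ketbra (psi j m) (psi j k)))"

end

theory Submission
  imports Defs
begin


lemma adj_adj[simp]: "adj (adj M) = M"
  by (simp add: adj_def vec_eq_iff)

lemma adj_mult: "adj (A ** B) = adj B ** adj (A::complex^'n^'n)"
  by (simp add: adj_def vec_eq_iff matrix_matrix_mult_def mult.commute)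

lemma adj_add: "adj (A + B) = adj A + adj B"
  by (simp add: adj_def vec_eq_iff)

lemma adj_diff: "adj (A - B) = adj A - adj B"
  by (simp add: adj_def vec_eq_iff)

lemma adj_zero[simp]: "adj 0 = 0"
  by (simp add: adj_def vec_eq_iff)

lemma adj_mat1[simp]: "adj (mat 1 :: complex^'n^'n) = mat 1"
  by (simp add: adj_def vec_eq_iff mat_def)

lemma adj_cmscale: "adj (cmscale c M) = cmscale (cnj c) (adj M)"
  by (simp add: adj_def cmscale_def vec_eq_iff)

lemma adj_scaleR: "adj (r *\<^sub>R M) = r *\<^sub>R adj M"
  by (simp add: adj_def vec_eq_iff)

lemma adj_sum: "adj (sum f S) = sum (\<lambda>i. adj (f i)) S"
  by (induction S rule: infinite_finite_induct) (auto simp: adj_add)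

lemma cinner_adj: "cinner x (M *v y) = cinner (adj M *v x) (y::complex^'n)"
proof -
  have "cinner x (M *v y) = (\<Sum>i\<in>UNIV. \<Sum>j\<in>UNIV. cnj (x$i) * M$i$j * y$j)"
    by (simp add: cinner_def matrix_vector_mult_def sum_distrib_left mult.assoc)
  also have "\<dots> = (\<Sum>j\<in>UNIV. \<Sum>i\<in>UNIV. cnj (x$i) * M$i$j * y$j)"
    by (rule sum.swap)
  also have "\<dots> = cinner (adj M *v x) y"
    by (simp add: cinner_def matrix_vector_mult_def adj_def sum_distrib_right sum_distrib_left ac_simps)
  finally show ?thesis .
qed

lemma cinner_add_right: "cinner x (y + z) = cinner x y + cinner x z"
  by (simp add: cinner_def distrib_left sum.distrib)

lemma cinner_add_left: "cinner (x + y) z = cinner x z + cinner y z"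
  by (simp add: cinner_def distrib_right sum.distrib)

lemma cinner_diff_right: "cinner x (y - z) = cinner x y - cinner x z"
  by (simp add: cinner_def right_diff_distrib sum_subtractf)

lemma cinner_scale_right: "cinner x (c *s y) = c * cinner x y"
  by (simp add: cinner_def sum_distrib_left mult.left_commute)

lemma cinner_scale_left: "cinner (c *s x) y = cnj c * cinner x y"
  by (simp add: cinner_def sum_distrib_left mult.assoc)

lemma cinner_zero_right[simp]: "cinner x 0 = 0"
  by (simp add: cinner_def)

lemma cinner_zero_left[simp]: "cinner 0 x = 0"
  by (simp add: cinner_def)

lemma cinner_sum_right: "cinner x (sum f S) = (\<Sum>i\<in>S. cinner x (f i))"
  by (induction S rule: infinite_finite_induct) (auto simp: cinner_add_right)

lemma cinner_sum_left: "cinner (sum f S) y = (\<Sum>i\<in>S. cinner (f i) y)"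
  by (induction S rule: infinite_finite_induct) (auto simp: cinner_add_left)

lemma cinner_cnj: "cnj (cinner x y) = cinner y x"
  by (simp add: cinner_def mult.commute)

lemma ketbra_apply: "ketbra a b *v x = cinner b x *s a"
  by (simp add: ketbra_def cinner_def matrix_vector_mult_def vec_eq_iff sum_distrib_right sum_distrib_left ac_simps)

lemma cmscale_apply: "cmscale c M *v x = c *s (M *v x)"
  by (simp add: cmscale_def matrix_vector_mult_def vec_eq_iff sum_distrib_left mult.assoc)

lemma sum_apply: "sum f S *v x = (\<Sum>i\<in>S. f i *v x)"
  by (induction S rule: infinite_finite_induct) (auto simp: matrix_vector_mult_add_rdistrib)

lemma cmscale_mult_left: "cmscale c A ** B = cmscale c (A ** B)"
  by (simp add: cmscale_def matrix_matrix_mult_def vec_eq_iff sum_distrib_left mult.assoc)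

lemma cmscale_mult_right: "A ** cmscale c B = cmscale c (A ** B)"
  by (simp add: cmscale_def matrix_matrix_mult_def vec_eq_iff sum_distrib_left mult.left_commute)

lemma matrix_add_rdistrib': "((B + C) ** A) = (B ** A) + (C ** (A::complex^'n^'n))"
  by (simp add: matrix_matrix_mult_def vec_eq_iff distrib_right sum.distrib)

lemma sum_mult_left: "sum f S ** (B::complex^'n^'n) = (\<Sum>i\<in>S. f i ** B)"
  by (induction S rule: infinite_finite_induct) (auto simp: matrix_add_rdistrib')

lemma sum_mult_right: "B ** sum f S = (\<Sum>i\<in>S. B ** f i)"
  by (induction S rule: infinite_finite_induct) (auto simp: matrix_add_ldistrib)

lemma cmscale_zero[simp]: "cmscale 0 M = 0"
  by (simp add: cmscale_def vec_eq_iff)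

lemma cmscale_add: "cmscale c (A + B) = cmscale c A + cmscale c B"
  by (simp add: cmscale_def vec_eq_iff distrib_left)

lemma cmscale_diff: "cmscale c (A - B) = cmscale c A - cmscale c B"
  by (simp add: cmscale_def vec_eq_iff right_diff_distrib)

lemma cmscale_cmscale: "cmscale a (cmscale b M) = cmscale (a*b) M"
  by (simp add: cmscale_def vec_eq_iff mult.assoc)

lemma cmscale_one[simp]: "cmscale 1 M = M"
  by (simp add: cmscale_def vec_eq_iff)

lemma unitary_adj: "unitary M \<Longrightarrow> unitary (adj M)"
  by (simp add: unitary_def)

lemma unitary_mult: "unitary A \<Longrightarrow> unitary B \<Longrightarrow> unitary (A ** (B::complex^'n^'n))"
  unfolding unitary_def adj_mult
  by (metis matrix_mul_assoc matrix_mul_lid)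

lemma unitary_left: "adj M ** M = mat 1 \<Longrightarrow> unitary (M::complex^'n^'n)"
  by (simp add: unitary_def matrix_left_right_inverse)

lemma matrix_inv_unitary: "unitary M \<Longrightarrow> matrix_inv M = adj M"
proof -
  assume u: "unitary M"
  have ex: "M ** adj M = mat 1 \<and> adj M ** M = mat 1" using u unfolding unitary_def by simp
  then have s: "M ** matrix_inv M = mat 1 \<and> matrix_inv M ** M = mat 1"
    unfolding matrix_inv_def by (rule someI)
  have "matrix_inv M = (adj M ** M) ** matrix_inv M" using ex by simp
  also have "\<dots> = adj M" using s by (metis matrix_mul_assoc matrix_mul_rid)
  finally show ?thesis .
qed


lemma mv_sum: "A *v sum f S = (\<Sum>i\<in>S. A *v f i)"
  by (induction S rule: infinite_finite_induct) (auto simp: matrix_vector_right_distrib)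

lemma ketbra_scale_left: "cmscale c (ketbra a b) = ketbra (c *s a) b"
  by (simp add: cmscale_def ketbra_def vec_eq_iff mult.assoc)

lemma ketbra_add_left: "ketbra (a + a') b = ketbra a b + ketbra a' b"
  by (simp add: ketbra_def vec_eq_iff distrib_right)

lemma ketbra_zero_left[simp]: "ketbra 0 b = 0"
  by (simp add: ketbra_def vec_eq_iff)

lemma ketbra_sum_left: "ketbra (sum f S) b = (\<Sum>i\<in>S. ketbra (f i) b)"
  by (induction S rule: infinite_finite_induct) (auto simp: ketbra_add_left)

lemma delta_sum: "b \<in> S \<Longrightarrow> finite S \<Longrightarrow> (\<Sum>k\<in>S. if k = b then g k else 0) = g b"
  by (simp add: sum.delta')

lemma double_delta:
  fixes d :: "nat \<Rightarrow> nat" and n :: nat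
  assumes "a < n" "b < d a"
  shows "(\<Sum>j<n. \<Sum>k<d j. if j = a \<and> k = b then g j k else 0) = g a b"
proof -
  have "(\<Sum>j<n. \<Sum>k<d j. if j = a \<and> k = b then g j k else 0) = (\<Sum>j<n. if j = a then g a b else 0)"
  proof (rule sum.cong[OF refl])
    fix j assume "j \<in> {..<n}"
    show "(\<Sum>k<d j. if j = a \<and> k = b then g j k else 0) = (if j = a then g a b else 0)"
    proof (cases "j = a")
      case True
      have "(\<Sum>k<d a. if k = b then g a k else 0) = g a b" using assms by (intro delta_sum) auto
      then show ?thesis using True assms by simp
    qed simp
  qed
  also have "\<dots> = g a b" using assms by simp
  finally show ?thesis .
qed

locale basis =
  fixes n :: nat and d :: "nat \<Rightarrow> nat" and psi :: "nat \<Rightarrow> nat \<Rightarrow> complex^'n::finite"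
    and E :: "nat \<Rightarrow> complex^'n^'n"
  assumes E_proj: "\<And>j. j < n \<Longrightarrow> self_adjoint (E j) \<and> E j ** E j = E j \<and> E j \<noteq> 0"
    and E_orth: "\<And>j l. j < n \<Longrightarrow> l < n \<Longrightarrow> j \<noteq> l \<Longrightarrow> E j ** E l = 0"
    and E_sum: "(\<Sum>j<n. E j) = mat 1"
    and psi_onb: "\<And>j. j < n \<Longrightarrow> onb_of (op_range (E j)) (psi j) (d j)"
begin

lemma E_sa: "j < n \<Longrightarrow> adj (E j) = E j"
  using E_proj self_adjoint_def by blast

lemma E_idem: "j < n \<Longrightarrow> E j ** E j = E j"
  using E_proj by blast

lemma E_range: "j < n \<Longrightarrow> y \<in> op_range (E j) \<Longrightarrow> E j *v y = y"
  unfolding op_range_def using E_idem by (auto simp: matrix_vector_mul_assoc)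

lemma E_psi: "j < n \<Longrightarrow> k < d j \<Longrightarrow> E j *v psi j k = psi j k"
  using psi_onb[of j] E_range unfolding onb_of_def by blast

lemma E_psi_other: "j < n \<Longrightarrow> a < n \<Longrightarrow> j \<noteq> a \<Longrightarrow> b < d a \<Longrightarrow> E j *v psi a b = 0"
proof -
  assume h: "j < n" "a < n" "j \<noteq> a" "b < d a"
  have "E j *v psi a b = E j *v (E a *v psi a b)" using E_psi h by simp
  also have "\<dots> = 0" using E_orth h by (simp add: matrix_vector_mul_assoc)
  finally show ?thesis .
qed

lemma E_apply_psi: "j < n \<Longrightarrow> a < n \<Longrightarrow> b < d a \<Longrightarrow> E j *v psi a b = (if j = a then psi a b else 0)"
  using E_psi E_psi_other by auto

lemma cinner_E: "j < n \<Longrightarrow> cinner x (E j *v y) = cinner (E j *v x) y"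
  using cinner_adj E_sa by metis

lemma psi_orth: "j < n \<Longrightarrow> a < n \<Longrightarrow> m < d j \<Longrightarrow> b < d a \<Longrightarrow>
    cinner (psi j m) (psi a b) = (if j = a \<and> m = b then 1 else 0)"
proof (cases "j = a")
  case True
  assume "j < n" "a < n" "m < d j" "b < d a"
  then show ?thesis using psi_onb[of j] True unfolding onb_of_def by auto
next
  case False
  assume h: "j < n" "a < n" "m < d j" "b < d a"
  have "cinner (psi j m) (psi a b) = cinner (E j *v psi j m) (psi a b)" using E_psi h by simp
  also have "\<dots> = cinner (psi j m) (E j *v psi a b)" using cinner_E h by simp
  also have "\<dots> = 0" using E_psi_other h False by simp
  finally show ?thesis using False by simp
qed

lemma block_exp:
  assumes j: "j < n" and y: "E j *v y = y"
  shows "y = (\<Sum>m<d j. cinner (psi j m) y *s psi j m)"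
proof -
  have "y \<in> op_range (E j)" using y unfolding op_range_def by (metis (mono_tags, lifting) mem_Collect_eq)
  then obtain c where c: "y = (\<Sum>k<d j. c k *s psi j k)" using psi_onb[OF j] unfolding onb_of_def by blast
  have "cinner (psi j m) y = c m" if "m < d j" for m
  proof -
    have "cinner (psi j m) y = (\<Sum>k<d j. c k * (if m = k then 1 else 0))"
      unfolding c cinner_sum_right cinner_scale_right
      by (rule sum.cong) (use psi_orth j that in auto)
    also have "\<dots> = (\<Sum>k<d j. if k = m then c k else 0)" by (rule sum.cong) auto
    also have "\<dots> = c m" using that delta_sum[of m "{..<d j}" c] by simp
    finally show ?thesis .
  qed
  then show ?thesis by (subst c) simp
qed

lemma full_exp: "x = (\<Sum>j<n. \<Sum>m<d j. cinner (psi j m) x *s psi j m)"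
proof -
  have "x = mat 1 *v x" by simp
  also have "\<dots> = (\<Sum>j<n. E j *v x)" by (simp add: E_sum[symmetric] sum_apply)
  also have "\<dots> = (\<Sum>j<n. \<Sum>m<d j. cinner (psi j m) x *s psi j m)"
  proof (rule sum.cong)
    fix j assume "j \<in> {..<n}"
    then have j: "j < n" by simp
    have "E j *v (E j *v x) = E j *v x" using E_idem j by (simp add: matrix_vector_mul_assoc)
    then have "E j *v x = (\<Sum>m<d j. cinner (psi j m) (E j *v x) *s psi j m)" by (rule block_exp[OF j])
    also have "\<dots> = (\<Sum>m<d j. cinner (psi j m) x *s psi j m)"
      by (rule sum.cong) (use j E_psi cinner_E in auto)
    finally show "E j *v x = (\<Sum>m<d j. cinner (psi j m) x *s psi j m)" .
  qed simp
  finally show ?thesis .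
qed

lemma vec_ext: "(\<And>j k. j < n \<Longrightarrow> k < d j \<Longrightarrow> cinner (psi j k) x = cinner (psi j k) y) \<Longrightarrow> x = y"
proof -
  assume h: "\<And>j k. j < n \<Longrightarrow> k < d j \<Longrightarrow> cinner (psi j k) x = cinner (psi j k) y"
  have "x = (\<Sum>j<n. \<Sum>m<d j. cinner (psi j m) x *s psi j m)" by (rule full_exp)
  also have "\<dots> = (\<Sum>j<n. \<Sum>m<d j. cinner (psi j m) y *s psi j m)"
    using h by (intro sum.cong refl) auto
  also have "\<dots> = y" by (rule full_exp[symmetric])
  finally show ?thesis .
qed

lemma mat_ext:
  assumes "\<And>j k. j < n \<Longrightarrow> k < d j \<Longrightarrow> A *v psi j k = B *v psi j k"
  shows "A = B"
proof (subst matrix_eq, intro allI)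
  fix x
  have ex: "x = (\<Sum>j<n. \<Sum>m<d j. cinner (psi j m) x *s psi j m)" by (rule full_exp)
  have "A *v x = A *v (\<Sum>j<n. \<Sum>m<d j. cinner (psi j m) x *s psi j m)"
    using ex by (rule arg_cong)
  also have "\<dots> = (\<Sum>j<n. \<Sum>m<d j. cinner (psi j m) x *s (A *v psi j m))"
    by (simp add: mv_sum vector_scalar_commute)
  also have "\<dots> = (\<Sum>j<n. \<Sum>m<d j. cinner (psi j m) x *s (B *v psi j m))"
    using assms by simp
  also have "\<dots> = B *v (\<Sum>j<n. \<Sum>m<d j. cinner (psi j m) x *s psi j m)"
    by (simp add: mv_sum vector_scalar_commute)
  also have "\<dots> = B *v x" using ex[symmetric] by (rule arg_cong)
  finally show "A *v x = B *v x" .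
qed

lemma ketsum_apply:
  assumes "a < n" "b < d a"
  shows "(\<Sum>j<n. \<Sum>k<d j. ketbra (f j k) (psi j k)) *v psi a b = f a b"
proof -
  have "(\<Sum>j<n. \<Sum>k<d j. ketbra (f j k) (psi j k)) *v psi a b
     = (\<Sum>j<n. \<Sum>k<d j. if j = a \<and> k = b then f j k else 0)"
    unfolding sum_apply ketbra_apply
  proof (intro sum.cong refl)
    fix j k assume "j \<in> {..<n}" "k \<in> {..<d j}"
    then show "cinner (psi j k) (psi a b) *s f j k = (if j = a \<and> k = b then f j k else 0)"
    proof -
      have "j < n" "k < d j" using \<open>j \<in> {..<n}\<close> \<open>k \<in> {..<d j}\<close> by auto
      then have "cinner (psi j k) (psi a b) = (if j = a \<and> k = b then 1 else 0)"
        using assms psi_orth by blast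
      then show ?thesis by simp
    qed
  qed
  also have "\<dots> = f a b" by (rule double_delta[where a=a and b=b and n=n and d=d and g=f, OF assms])
  finally show ?thesis .
qed

definition blk :: "(nat \<Rightarrow> nat \<Rightarrow> nat \<Rightarrow> complex) \<Rightarrow> complex^'n^'n" where
  "blk u = (\<Sum>j<n. \<Sum>m<d j. \<Sum>k<d j. cmscale (u j m k) (ketbra (psi j m) (psi j k)))"

lemma blk_eq: "blk u = (\<Sum>j<n. \<Sum>k<d j. ketbra (\<Sum>m<d j. u j m k *s psi j m) (psi j k))"
  unfolding blk_def ketbra_sum_left ketbra_scale_left
  by (rule sum.cong[OF refl], rule sum.swap)

lemma blk_apply: "a < n \<Longrightarrow> b < d a \<Longrightarrow> blk u *v psi a b = (\<Sum>m<d a. u a m b *s psi a m)"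
  unfolding blk_eq by (rule ketsum_apply)

lemma blk_commute:
  assumes j: "j < n" shows "blk u ** E j = E j ** blk u"
proof (rule mat_ext)
  fix a b assume ab: "a < n" "b < d a"
  have "(blk u ** E j) *v psi a b = blk u *v (E j *v psi a b)" by (simp add: matrix_vector_mul_assoc)
  also have "\<dots> = (if j = a then (\<Sum>m<d a. u a m b *s psi a m) else 0)"
    using ab j by (simp add: E_apply_psi blk_apply)
  also have "\<dots> = (\<Sum>m<d a. u a m b *s (E j *v psi a m))"
    using ab j by (cases "j = a") (auto simp: E_apply_psi intro!: sum.neutral)
  also have "\<dots> = E j *v (blk u *v psi a b)" using ab by (simp add: blk_apply mv_sum vector_scalar_commute)
  also have "\<dots> = (E j ** blk u) *v psi a b" by (simp add: matrix_vector_mul_assoc)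
  finally show "(blk u ** E j) *v psi a b = (E j ** blk u) *v psi a b" .
qed

lemma inner_block:
  assumes j: "j < n" and y: "E j *v y = y"
  shows "(\<Sum>l<d j. cinner x (psi j l) * cinner (psi j l) y) = cinner x y"
proof -
  have "cinner x y = cinner x (\<Sum>m<d j. cinner (psi j m) y *s psi j m)"
    using block_exp[OF j y] by (rule arg_cong)
  also have "\<dots> = (\<Sum>l<d j. cinner x (psi j l) * cinner (psi j l) y)"
    by (simp add: cinner_sum_right cinner_scale_right mult.commute)
  finally show ?thesis by simp
qed

lemma blk_inner:
  assumes ab: "a < n" "b < d a" and ab': "a' < n" "b' < d a'"
  shows "cinner (blk u *v psi a' b') (blk u *v psi a b) =
      (if a' = a then (\<Sum>m<d a. cnj (u a m b') * u a m b) else 0)"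
proof -
  have "cinner (blk u *v psi a' b') (blk u *v psi a b) =
      (\<Sum>k<d a. \<Sum>m<d a'. cnj (u a' m b') * u a k b * cinner (psi a' m) (psi a k))"
    using ab ab' by (simp add: blk_apply cinner_sum_left cinner_sum_right cinner_scale_left
        cinner_scale_right sum_distrib_left ac_simps)
  also have "\<dots> = (\<Sum>m<d a'. \<Sum>k<d a. cnj (u a' m b') * u a k b * cinner (psi a' m) (psi a k))"
    by (rule sum.swap)
  also have "\<dots> = (\<Sum>m<d a'. \<Sum>k<d a. if a' = a \<and> m = k then cnj (u a' m b') * u a k b else 0)"
    using ab ab' by (intro sum.cong refl) (simp add: psi_orth)
  also have "\<dots> = (if a' = a then (\<Sum>m<d a. cnj (u a m b') * u a m b) else 0)"
  proof (cases "a' = a")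
    case True
    have "(\<Sum>m<d a. \<Sum>k<d a. if m = k then cnj (u a m b') * u a k b else 0)
        = (\<Sum>m<d a. cnj (u a m b') * u a m b)"
      by (intro sum.cong refl) (simp add: sum.delta)
    then show ?thesis using True by simp
  qed simp
  finally show ?thesis .
qed

definition blk_unit :: "(nat \<Rightarrow> nat \<Rightarrow> nat \<Rightarrow> complex) \<Rightarrow> bool" where
  "blk_unit u \<longleftrightarrow> (\<forall>j<n. (\<forall>m<d j. \<forall>k<d j.
                 (\<Sum>l<d j. cnj (u j l m) * u j l k) = (if m = k then 1 else 0)) \<and>
               (\<forall>m<d j. \<forall>k<d j.
                 (\<Sum>l<d j. u j m l * cnj (u j k l)) = (if m = k then 1 else 0)))"

lemma blockG_eq: "blockG n d psi = {blk u | u. blk_unit u}"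
  unfolding blockG_def blk_def blk_unit_def by simp

lemma blk_unitary:
  assumes bu: "\<And>j m k. j < n \<Longrightarrow> m < d j \<Longrightarrow> k < d j \<Longrightarrow>
       (\<Sum>l<d j. cnj (u j l m) * u j l k) = (if m = k then 1 else 0)"
  shows "unitary (blk u)"
proof (rule unitary_left, rule mat_ext)
  fix a b assume ab: "a < n" "b < d a"
  show "(adj (blk u) ** blk u) *v psi a b = mat 1 *v psi a b"
  proof (rule vec_ext)
    fix a' b' assume ab': "a' < n" "b' < d a'"
    have "cinner (psi a' b') ((adj (blk u) ** blk u) *v psi a b)
        = cinner (blk u *v psi a' b') (blk u *v psi a b)"
      by (simp add: matrix_vector_mul_assoc[symmetric] cinner_adj)
    also have "\<dots> = (if a' = a \<and> b' = b then 1 else 0)"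
    proof (cases "a' = a")
      case True
      then show ?thesis using ab ab' bu[of a b' b] by (simp add: blk_inner)
    qed (use ab ab' in \<open>simp add: blk_inner\<close>)
    also have "\<dots> = cinner (psi a' b') (mat 1 *v psi a b)"
      using ab ab' by (simp add: psi_orth)
    finally show "cinner (psi a' b') ((adj (blk u) ** blk u) *v psi a b) = cinner (psi a' b') (mat 1 *v psi a b)" .
  qed
qed

lemma G_char: "M \<in> blockG n d psi \<longleftrightarrow> unitary M \<and> (\<forall>j<n. M ** E j = E j ** M)"
proof
  assume "M \<in> blockG n d psi"
  then obtain u where M: "M = blk u" and bu: "blk_unit u" unfolding blockG_eq by blast
  show "unitary M \<and> (\<forall>j<n. M ** E j = E j ** M)"
    using bu unfolding M blk_unit_def by (auto intro!: blk_unitary blk_commute)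
next
  assume h: "unitary M \<and> (\<forall>j<n. M ** E j = E j ** M)"
  define u where "u j m k = cinner (psi j m) (M *v psi j k)" for j m k
  have EM: "E j *v (M *v y) = M *v y" if "j < n" "E j *v y = y" for j y
    using h that by (metis matrix_vector_mul_assoc)
  have adjc: "adj M ** E j = E j ** adj M" if "j < n" for j
    using h that E_sa by (metis adj_mult)
  have EMa: "E j *v (adj M *v y) = adj M *v y" if "j < n" "E j *v y = y" for j y
    using adjc that by (metis matrix_vector_mul_assoc)
  have Mb: "M = blk u"
  proof (rule mat_ext)
    fix a b assume ab: "a < n" "b < d a"
    have "E a *v (M *v psi a b) = M *v psi a b" using EM ab E_psi by blast
    then show "M *v psi a b = blk u *v psi a b"
      using block_exp[OF ab(1)] ab by (simp add: blk_apply u_def)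
  qed
  have "blk_unit u" unfolding blk_unit_def
  proof (intro allI impI conjI)
    fix j m k assume j: "j < n" and mk: "m < d j" "k < d j"
    have "(\<Sum>l<d j. cnj (u j l m) * u j l k) = (\<Sum>l<d j. cinner (M *v psi j m) (psi j l) * cinner (psi j l) (M *v psi j k))"
      unfolding u_def by (simp add: cinner_cnj)
    also have "\<dots> = cinner (M *v psi j m) (M *v psi j k)"
      using j mk EM E_psi by (intro inner_block) auto
    also have "\<dots> = cinner (psi j m) ((adj M ** M) *v psi j k)"
      by (simp add: cinner_adj matrix_vector_mul_assoc[symmetric])
    also have "\<dots> = (if m = k then 1 else 0)"
      using h j mk by (simp add: unitary_def psi_orth)
    finally show "(\<Sum>l<d j. cnj (u j l m) * u j l k) = (if m = k then 1 else 0)" .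
  next
    fix j m k assume j: "j < n" and mk: "m < d j" "k < d j"
    have "(\<Sum>l<d j. u j m l * cnj (u j k l)) = (\<Sum>l<d j. cinner (adj M *v psi j m) (psi j l) * cinner (psi j l) (adj M *v psi j k))"
      unfolding u_def
      by (intro sum.cong refl) (metis adj_adj cinner_adj cinner_cnj)
    also have "\<dots> = cinner (adj M *v psi j m) (adj M *v psi j k)"
      using j mk EMa E_psi by (intro inner_block) auto
    also have "\<dots> = cinner (psi j m) ((M ** adj M) *v psi j k)"
      by (metis adj_adj cinner_adj matrix_vector_mul_assoc)
    also have "\<dots> = (if m = k then 1 else 0)"
      using h j mk by (simp add: unitary_def psi_orth)
    finally show "(\<Sum>l<d j. u j m l * cnj (u j k l)) = (if m = k then 1 else 0)" .
  qed
  then show "M \<in> blockG n d psi" unfolding blockG_eq using Mb by blast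
qed

end

lemma sc_comp: "((r::real) *\<^sub>R (M::complex^'n^'m))$i$j = complex_of_real r * M$i$j"
  by (simp only: vector_scaleR_component) (simp add: scaleR_conv_of_real)

lemma matmul_scaleR_right: "(A::complex^'n^'n) ** (r *\<^sub>R B) = r *\<^sub>R (A ** B)"
  by (simp add: matrix_matrix_mult_def vec_eq_iff sc_comp sum_distrib_left scaleR_sum_right ac_simps)

lemma matmul_scaleR_left: "(r *\<^sub>R A) ** (B::complex^'n^'n) = r *\<^sub>R (A ** B)"
  by (simp add: matrix_matrix_mult_def vec_eq_iff sc_comp sum_distrib_left scaleR_sum_right ac_simps)

lemma bb_mult: "bounded_bilinear (\<lambda>(A::complex^'n::finite^'n) (B::complex^'n^'n). A ** B)"
  unfolding bilinear_conv_bounded_bilinear[symmetric] bilinear_def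
  by (auto intro!: linearI simp: matrix_add_ldistrib matrix_add_rdistrib' matmul_scaleR_right matmul_scaleR_left)

lemma bl_adj: "bounded_linear (adj :: complex^'n::finite^'n \<Rightarrow> _)"
  unfolding linear_conv_bounded_linear[symmetric]
  by (auto intro!: linearI simp: adj_add adj_scaleR)

lemma bl_cmscale: "bounded_linear (\<lambda>c. cmscale c (K::complex^'n::finite^'n))"
  unfolding linear_conv_bounded_linear[symmetric]
  by (auto intro!: linearI simp: cmscale_def vec_eq_iff distrib_right sc_comp)

lemma bl_mult_left: "bounded_linear (\<lambda>B::complex^'n^'n. (A::complex^'n::finite^'n) ** B)"
  by (rule bounded_bilinear.bounded_linear_right[OF bb_mult])

lemma bl_mult_right: "bounded_linear (\<lambda>A::complex^'n^'n. A ** (B::complex^'n::finite^'n))"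
  by (rule bounded_bilinear.bounded_linear_left[OF bb_mult])

lemma cmscale_minus_one: "cmscale (-1) M = - M"
  by (simp add: cmscale_def vec_eq_iff)

lemma cmscale_uminus: "cmscale (- c) M = - cmscale c M"
  by (simp add: cmscale_def vec_eq_iff)

lemma vsum_scale: "c *s sum f S = (\<Sum>i\<in>S. c *s (f i::complex^'n))"
  by (simp add: vec_eq_iff sum_component sum_distrib_left)

lemma vsum_rscale: "(sum f S) *s (v::complex^'n) = (\<Sum>i\<in>S. f i *s v)"
  by (simp add: vec_eq_iff sum_component sum_distrib_right)


lemma bl_cmscale2: "bounded_linear (cmscale c :: complex^'n::finite^'n \<Rightarrow> _)"
  unfolding linear_conv_bounded_linear[symmetric]
  by (auto intro!: linearI simp: cmscale_def vec_eq_iff distrib_left sc_comp)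

lemma cont_mult: "continuous_on s f \<Longrightarrow> continuous_on s g \<Longrightarrow>
   continuous_on s (\<lambda>x. (f x::complex^'n::finite^'n) ** (g x::complex^'n^'n))"
  using bounded_bilinear.continuous_on[OF bb_mult] by blast

lemma cont_cmscale: "continuous_on s f \<Longrightarrow>
   continuous_on s (\<lambda>x. cmscale c (f x::complex^'n::finite^'n))"
  using bounded_linear.continuous_on[OF bl_cmscale2] by blast

lemma deriv_mult:
  "(f has_vector_derivative f') (at x within s) \<Longrightarrow> (g has_vector_derivative g') (at x within s) \<Longrightarrow>
   ((\<lambda>x. (f x::complex^'n::finite^'n) ** (g x::complex^'n^'n)) has_vector_derivative (f x ** g' + f' ** g x)) (at x within s)"
  using bounded_bilinear.has_vector_derivative[OF bb_mult] by blast

lemma deriv_adj: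
  "(f has_vector_derivative f') F \<Longrightarrow> ((\<lambda>x. adj (f x::complex^'n::finite^'n)) has_vector_derivative adj f') F"
  using bounded_linear.has_vector_derivative[OF bl_adj] by blast

lemma deriv_cmscale:
  "(g has_vector_derivative g') F \<Longrightarrow> ((\<lambda>x. cmscale (g x) (K::complex^'n::finite^'n)) has_vector_derivative cmscale g' K) F"
  using bounded_linear.has_vector_derivative[OF bl_cmscale] by blast

lemma cmscale_add_left: "cmscale a X + cmscale b X = cmscale (a + b) X"
  by (simp add: cmscale_def vec_eq_iff distrib_right)

lemma neg_smult: "(- c) *s v = - (c *s (v::complex^'n))"
  by (simp add: vec_eq_iff)

lemma cinner_adj': "cinner x (adj M *v y) = cinner (M *v x) (y::complex^'n)"
  by (metis adj_adj cinner_adj)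

context basis begin

lemma Pi_quot_shift:
  assumes g: "g \<in> blockG n d psi"
  shows "Pi_quot n d psi (A ** g) = Pi_quot n d psi A"
proof -
  have gc: "unitary g" "\<forall>j<n. g ** E j = E j ** g" using g G_char by auto
  have closed: "x ** y \<in> blockG n d psi" if "x \<in> blockG n d psi" "y \<in> blockG n d psi" for x y
  proof -
    have "unitary x" "\<forall>j<n. x ** E j = E j ** x" "unitary y" "\<forall>j<n. y ** E j = E j ** y"
      using that G_char by auto
    then show ?thesis unfolding G_char
      by (auto simp: unitary_mult) (metis matrix_mul_assoc)
  qed
  have ginv: "adj g \<in> blockG n d psi"
  proof -
    have "\<forall>j<n. adj g ** E j = E j ** adj g" using gc E_sa by (metis adj_mult)
    then show ?thesis using gc unitary_adj G_char by blast
  qed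
  show ?thesis unfolding Pi_quot_def
  proof (intro set_eqI iffI)
    fix x assume "x \<in> {A ** g ** h |h. h \<in> blockG n d psi}"
    then obtain h where "x = A ** g ** h" "h \<in> blockG n d psi" by blast
    then show "x \<in> {A ** h |h. h \<in> blockG n d psi}"
      using closed[OF g] by (metis (mono_tags, lifting) matrix_mul_assoc mem_Collect_eq)
  next
    fix x assume "x \<in> {A ** h |h. h \<in> blockG n d psi}"
    then obtain h where h: "x = A ** h" "h \<in> blockG n d psi" by blast
    have "x = A ** g ** (adj g ** h)" using h gc unfolding unitary_def by (metis matrix_mul_assoc matrix_mul_lid)
    moreover have "adj g ** h \<in> blockG n d psi" using closed[OF ginv h(2)] .
    ultimately show "x \<in> {A ** g ** h |h. h \<in> blockG n d psi}" by blast
  qed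
qed

end



theorem proposition6p15:
  fixes H :: "real \<Rightarrow> complex^'n::finite^'n"
    and U :: "real \<Rightarrow> real \<Rightarrow> complex^'n^'n"
    and n :: nat and lam :: "nat \<Rightarrow> real" and E :: "nat \<Rightarrow> complex^'n^'n"
    and X0 :: "complex^'n^'n" and T :: real
    and d :: "nat \<Rightarrow> nat" and psi :: "nat \<Rightarrow> nat \<Rightarrow> complex^'n"
    and Vt :: "nat \<Rightarrow> real \<Rightarrow> nat \<Rightarrow> nat \<Rightarrow> complex"
    and psibar :: "nat \<Rightarrow> nat \<Rightarrow> real \<Rightarrow> complex^'n"
    and psit psitil :: "nat \<Rightarrow> nat \<Rightarrow> real \<Rightarrow> complex^'n"
    and Hsub :: "nat \<Rightarrow> real \<Rightarrow> (complex^'n) set"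
    and C :: "nat \<Rightarrow> real \<Rightarrow> nat \<Rightarrow> nat \<Rightarrow> complex"
    and Util Ubar :: "real \<Rightarrow> complex^'n^'n"
    and W :: "real \<Rightarrow> (complex^'n^'n) set"
  assumes H_cont: "continuous_on UNIV H"
    and H_sa: "\<And>t. self_adjoint (H t)"
    and U_unitary: "\<And>t s. unitary (U t s)"
    and U_id: "\<And>t. U t t = mat 1"
    and U_comp: "\<And>t r s. U t r ** U r s = U t s"
    and U_deriv: "\<And>t s. ((\<lambda>t. U t s) has_vector_derivative cmscale (- \<i>) (H t ** U t s)) (at t)"
    and X0_def: "X0 = (\<Sum>j<n. cmscale (complex_of_real (lam j)) (E j))"
    and lam_distinct: "inj_on lam {..<n}"
    and E_proj: "\<And>j. j < n \<Longrightarrow> self_adjoint (E j) \<and> E j ** E j = E j \<and> E j \<noteq> 0"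
    and E_orth: "\<And>j l. j < n \<Longrightarrow> l < n \<Longrightarrow> j \<noteq> l \<Longrightarrow> E j ** E l = 0"
    and E_sum: "(\<Sum>j<n. E j) = mat 1"
    and T_pos: "T > 0"
    and E_cyclic: "\<And>j. j < n \<Longrightarrow> U 0 T ** E j ** U T 0 = E j"
    and psi_onb: "\<And>j. j < n \<Longrightarrow> onb_of (op_range (E j)) (psi j) (d j)"
    and psit_def: "\<And>j k t. psit j k t = U 0 t *v psi j k"
    and Hsub_def: "\<And>j t. Hsub j t = op_range (U 0 t ** E j ** U t 0)"
    and C_def: "\<And>j t m k. C j t m k = cinner (psi j m) (H t *v psi j k)"
    and Vt_ode: "\<And>j t m k. j < n \<Longrightarrow> m < d j \<Longrightarrow> k < d j \<Longrightarrow>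
        ((\<lambda>s. Vt j s m k) has_vector_derivative
           (- \<i>) * (\<Sum>l<d j. C j t m l * Vt j t l k)) (at t)"
    and Vt_init: "\<And>j m k. j < n \<Longrightarrow> m < d j \<Longrightarrow> k < d j \<Longrightarrow>
        Vt j 0 m k = (if m = k then 1 else 0)"
    and psitil_def: "\<And>j k t. psitil j k t = (\<Sum>m<d j. Vt j t m k *s psit j m t)"
    and psibar_onb: "\<And>j t. j < n \<Longrightarrow> t \<in> {0..T} \<Longrightarrow>
        onb_of (Hsub j t) (\<lambda>k. psibar j k t) (d j)"
    and psibar_C1: "\<And>j k. j < n \<Longrightarrow> k < d j \<Longrightarrow>
        \<exists>D. (\<forall>t\<in>{0..T}. ((\<lambda>s. psibar j k s) has_vector_derivative D t) (at t within {0..T}))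
            \<and> continuous_on {0..T} D"
    and psibar_T: "\<And>j k. j < n \<Longrightarrow> k < d j \<Longrightarrow> psibar j k T = psi j k"
    and psibar_0: "\<And>j k. j < n \<Longrightarrow> k < d j \<Longrightarrow> psibar j k 0 = psi j k"
    and Util_def: "\<And>t. Util t = (\<Sum>j<n. \<Sum>k<d j. ketbra (psitil j k t) (psi j k))"
    and Ubar_def: "\<And>t. Ubar t = (\<Sum>j<n. \<Sum>k<d j. ketbra (psibar j k t) (psi j k))"
    and W_def: "\<And>t. W t = Pi_quot n d psi (Ubar t)"
  shows "\<exists>D. continuous_on {0..T} D \<and>
           (\<forall>t\<in>{0..T}. unitary (Util t)
              \<and> (Util has_vector_derivative D t) (at t within {0..T})
              \<and> Pi_quot n d psi (Util t) = W t
              \<and> can_conn n d psi (Util t) (D t) = 0)"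
proof -
  interpret bs: basis n d psi E
    by (unfold_locales) (use E_proj E_orth E_sum psi_onb in auto)
  have adjU: "adj (U a b) = U b a" for a b
  proof -
    have "adj (U a b) = adj (U a b) ** (U a b ** U b a)" using U_comp U_id by simp
    also have "\<dots> = U b a" using U_unitary[of a b] by (simp add: unitary_def matrix_mul_assoc)
    finally show ?thesis .
  qed
  have UU: "U a b ** (U b a ** X) = X" for a b X
    using U_comp U_id by (simp add: matrix_mul_assoc)
  define Vb where "Vb t = bs.blk (\<lambda>j m k. Vt j t m k)" for t
  define Cb where "Cb t = (\<Sum>j<n. E j ** H t ** E j)" for t
  define Vd where "Vd t = bs.blk (\<lambda>j m k. (- \<i>) * (\<Sum>l<d j. C j t m l * Vt j t l k))" for t
  have dVb: "((\<lambda>s. Vb s) has_vector_derivative Vd t) (at t)" for t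
    unfolding Vb_def Vd_def bs.blk_def
    by (intro has_vector_derivative_sum deriv_cmscale Vt_ode) auto
  have Cb_psi: "Cb t *v psi a l = (\<Sum>m<d a. C a t m l *s psi a m)" if al: "a < n" "l < d a" for t a l
  proof -
    have "Cb t *v psi a l = (\<Sum>j<n. E j *v (H t *v (E j *v psi a l)))"
      by (simp add: Cb_def sum_apply matrix_vector_mul_assoc matrix_mul_assoc)
    also have "\<dots> = (\<Sum>j<n. if j = a then E a *v (H t *v psi a l) else 0)"
      using al by (intro sum.cong refl) (simp add: bs.E_apply_psi)
    also have "\<dots> = E a *v (H t *v psi a l)" using al by simp
    also have "\<dots> = (\<Sum>m<d a. cinner (psi a m) (E a *v (H t *v psi a l)) *s psi a m)"
      by (rule bs.block_exp[OF al(1)]) (simp add: matrix_vector_mul_assoc matrix_mul_assoc bs.E_idem al)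
    also have "\<dots> = (\<Sum>m<d a. C a t m l *s psi a m)"
      using al by (intro sum.cong refl) (simp add: bs.cinner_E bs.E_psi C_def)
    finally show ?thesis .
  qed
  have Vd_eq: "Vd t = cmscale (- \<i>) (Cb t ** Vb t)" for t
  proof (rule bs.mat_ext)
    fix a b assume ab: "a < n" "b < d a"
    have "cmscale (- \<i>) (Cb t ** Vb t) *v psi a b = (- \<i>) *s (\<Sum>l<d a. Vt a t l b *s (Cb t *v psi a l))"
      using ab by (simp add: cmscale_apply matrix_vector_mul_assoc[symmetric] Vb_def bs.blk_apply
          mv_sum vector_scalar_commute)
    also have "\<dots> = (\<Sum>l<d a. \<Sum>m<d a. ((- \<i>) * Vt a t l b * C a t m l) *s psi a m)"
      using ab by (simp add: Cb_psi vsum_scale vector_smult_assoc mult.assoc)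
    also have "\<dots> = (\<Sum>m<d a. \<Sum>l<d a. ((- \<i>) * Vt a t l b * C a t m l) *s psi a m)"
      by (rule sum.swap)
    also have "\<dots> = (\<Sum>m<d a. ((- \<i>) * (\<Sum>l<d a. C a t m l * Vt a t l b)) *s psi a m)"
      by (intro sum.cong refl) (simp add: vsum_rscale sum_distrib_left neg_smult sum_negf ac_simps)
    also have "\<dots> = Vd t *v psi a b"
      using ab by (simp add: Vd_def bs.blk_apply)
    finally show "Vd t *v psi a b = cmscale (- \<i>) (Cb t ** Vb t) *v psi a b" by simp
  qed
  have Cb_sa: "adj (Cb t) = Cb t" for t
    unfolding Cb_def adj_sum
    by (intro sum.cong refl) (simp add: adj_mult bs.E_sa H_sa[unfolded self_adjoint_def] matrix_mul_assoc)
  have Vb0: "Vb 0 = mat 1"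
  proof (rule bs.mat_ext)
    fix a b assume ab: "a < n" "b < d a"
    have "Vb 0 *v psi a b = (\<Sum>m<d a. (if m = b then 1 else 0) *s psi a m)"
      using ab by (simp add: Vb_def bs.blk_apply Vt_init)
    also have "\<dots> = psi a b" using ab by (simp add: if_distrib[of "\<lambda>c. c *s _"] cong: if_cong)
    finally show "Vb 0 *v psi a b = mat 1 *v psi a b" by simp
  qed
  have VbU: "adj (Vb t) ** Vb t = mat 1" for t
  proof -
    have "((\<lambda>s. adj (Vb s) ** Vb s) has_vector_derivative 0) (at s within UNIV)" for s
    proof -
      have "((\<lambda>s. adj (Vb s) ** Vb s) has_vector_derivative (adj (Vb s) ** Vd s + adj (Vd s) ** Vb s)) (at s)"
        by (intro deriv_mult deriv_adj dVb)
      moreover have "adj (Vb s) ** Vd s + adj (Vd s) ** Vb s = 0"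
        by (simp add: Vd_eq adj_cmscale adj_mult Cb_sa cmscale_mult_left cmscale_mult_right
            matrix_mul_assoc cmscale_add_left)
      ultimately show ?thesis by simp
    qed
    then obtain c where "\<And>x. x \<in> UNIV \<Longrightarrow> adj (Vb x) ** Vb x = c"
      using has_vector_derivative_zero_constant[of UNIV "\<lambda>s. adj (Vb s) ** Vb s"] by blast
    then have "adj (Vb t) ** Vb t = adj (Vb 0) ** Vb 0" by simp
    then show ?thesis using Vb0 by simp
  qed
  have Vb_unit: "unitary (Vb t)" for t using VbU unitary_left by blast
  have Vb_comm: "j < n \<Longrightarrow> Vb t ** E j = E j ** Vb t" for j t
    unfolding Vb_def by (rule bs.blk_commute)
  have Util_eq: "Util t = U 0 t ** Vb t" for t
  proof (rule bs.mat_ext)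
    fix a b assume ab: "a < n" "b < d a"
    have "Util t *v psi a b = psitil a b t" unfolding Util_def using ab by (rule bs.ketsum_apply)
    also have "\<dots> = U 0 t *v (Vb t *v psi a b)"
      using ab by (simp add: psitil_def psit_def Vb_def bs.blk_apply mv_sum vector_scalar_commute)
    finally show "Util t *v psi a b = (U 0 t ** Vb t) *v psi a b" by (simp add: matrix_vector_mul_assoc)
  qed
  have dU0: "((\<lambda>s. U 0 s) has_vector_derivative cmscale \<i> (U 0 t ** H t)) (at t)" for t
  proof -
    have "((\<lambda>s. adj (U s 0)) has_vector_derivative adj (cmscale (- \<i>) (H t ** U t 0))) (at t)"
      by (intro deriv_adj U_deriv)
    then show ?thesis
      by (simp add: adjU adj_cmscale adj_mult H_sa[unfolded self_adjoint_def])
  qed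
  define D where "D t = U 0 t ** Vd t + cmscale \<i> (U 0 t ** H t) ** Vb t" for t
  have dUtil: "(Util has_vector_derivative D t) (at t)" for t
  proof -
    have "Util = (\<lambda>s. U 0 s ** Vb s)" using Util_eq by auto
    then show ?thesis unfolding D_def by (simp add: deriv_mult dU0 dVb)
  qed
  have cU0: "continuous_on S (\<lambda>s. U 0 s)" for S
    using dU0 by (intro continuous_at_imp_continuous_on ballI) (metis has_vector_derivative_continuous)
  have cVb: "continuous_on S Vb" for S
    using dVb by (intro continuous_at_imp_continuous_on ballI) (metis has_vector_derivative_continuous)
  have cH: "continuous_on S H" for S using H_cont continuous_on_subset by blast
  have cCb: "continuous_on S Cb" for S
    unfolding Cb_def[abs_def] by (intro continuous_on_sum cont_mult continuous_on_const cH)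
  have D_eq: "D = (\<lambda>t. U 0 t ** cmscale (- \<i>) (Cb t ** Vb t) + cmscale \<i> (U 0 t ** H t) ** Vb t)"
    unfolding D_def[abs_def] Vd_eq by simp
  have cD: "continuous_on {0..T} D"
    unfolding D_eq by (intro continuous_on_add cont_mult cont_cmscale cU0 cVb cCb cH)
  show ?thesis
  proof (intro exI conjI ballI)
    show "continuous_on {0..T} D" by (rule cD)
  next
    fix t assume t: "t \<in> {0..T}"
    show "unitary (Util t)" unfolding Util_eq using U_unitary Vb_unit by (rule unitary_mult)
  next
    fix t assume t: "t \<in> {0..T}"
    show "(Util has_vector_derivative D t) (at t within {0..T})"
      using dUtil has_vector_derivative_at_within by blast
  next
    fix t assume t: "t \<in> {0..T}"
    define P where "P j = U 0 t ** E j ** U t 0" for j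
    have PP: "P j ** P l = U 0 t ** (E j ** E l) ** U t 0" for j l
      by (simp add: P_def matrix_mul_assoc[symmetric] UU)
    have P_idem: "P j ** P j = P j" if "j < n" for j
      using PP[of j j] bs.E_idem[OF that] by (simp add: P_def)
    have P_orth: "P j ** P l = 0" if "j < n" "l < n" "j \<noteq> l" for j l
      using PP[of j l] E_orth[OF that] by simp
    have P_sa: "adj (P j) = P j" if "j < n" for j
      using that by (simp add: P_def adj_mult adjU bs.E_sa matrix_mul_assoc)
    have pb_in: "P j *v psibar j k t = psibar j k t" if jk: "j < n" "k < d j" for j k
    proof -
      have "psibar j k t \<in> Hsub j t" using psibar_onb[OF jk(1) t] jk(2) unfolding onb_of_def by blast
      then obtain y where y: "psibar j k t = P j *v y" unfolding Hsub_def op_range_def P_def by blast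
      show ?thesis unfolding y matrix_vector_mul_assoc P_idem[OF jk(1)] ..
    qed
    have Ubar_apply: "Ubar t *v psi a b = psibar a b t" if "a < n" "b < d a" for a b
      unfolding Ubar_def using that by (rule bs.ketsum_apply)
    have pb_orth: "cinner (psibar a' b' t) (psibar a b t) = (if a' = a \<and> b' = b then 1 else 0)"
      if ab: "a < n" "b < d a" and ab': "a' < n" "b' < d a'" for a b a' b'
    proof (cases "a' = a")
      case True
      then show ?thesis using psibar_onb[OF ab(1) t] ab ab' unfolding onb_of_def by auto
    next
      case False
      have "cinner (psibar a' b' t) (psibar a b t) = cinner (P a' *v psibar a' b' t) (P a *v psibar a b t)"
        using pb_in ab ab' by simp
      also have "\<dots> = cinner (psibar a' b' t) ((P a' ** P a) *v psibar a b t)"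
        by (metis P_sa ab'(1) cinner_adj' matrix_vector_mul_assoc)
      also have "\<dots> = 0" using P_orth[OF ab'(1) ab(1) False] by simp
      finally show ?thesis using False by simp
    qed
    have Ubar_unit: "unitary (Ubar t)"
    proof (rule unitary_left, rule bs.mat_ext)
      fix a b assume ab: "a < n" "b < d a"
      show "(adj (Ubar t) ** Ubar t) *v psi a b = mat 1 *v psi a b"
      proof (rule bs.vec_ext)
        fix a' b' assume ab': "a' < n" "b' < d a'"
        have "cinner (psi a' b') ((adj (Ubar t) ** Ubar t) *v psi a b)
            = cinner (Ubar t *v psi a' b') (Ubar t *v psi a b)"
          by (simp add: matrix_vector_mul_assoc[symmetric] cinner_adj')
        also have "\<dots> = (if a' = a \<and> b' = b then 1 else 0)"
          using ab ab' by (simp add: Ubar_apply pb_orth)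
        also have "\<dots> = cinner (psi a' b') (mat 1 *v psi a b)"
          using ab ab' by (simp add: bs.psi_orth)
        finally show "cinner (psi a' b') ((adj (Ubar t) ** Ubar t) *v psi a b) = cinner (psi a' b') (mat 1 *v psi a b)" .
      qed
    qed
    have Ubar_E: "Ubar t ** E j = P j ** Ubar t" if j: "j < n" for j
    proof (rule bs.mat_ext)
      fix a b assume ab: "a < n" "b < d a"
      have "(Ubar t ** E j) *v psi a b = (if j = a then psibar a b t else 0)"
        using ab j by (simp add: matrix_vector_mul_assoc[symmetric] bs.E_apply_psi Ubar_apply)
      also have "\<dots> = (P j ** Ubar t) *v psi a b"
      proof (cases "j = a")
        case True
        then show ?thesis using ab pb_in by (simp add: matrix_vector_mul_assoc[symmetric] Ubar_apply)
      next
        case False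
        have "(P j ** Ubar t) *v psi a b = P j *v (P a *v psibar a b t)"
          using ab pb_in by (simp add: matrix_vector_mul_assoc[symmetric] Ubar_apply)
        also have "\<dots> = 0" using P_orth[OF j ab(1) False] by (simp add: matrix_vector_mul_assoc)
        finally show ?thesis using False by simp
      qed
      finally show "(Ubar t ** E j) *v psi a b = (P j ** Ubar t) *v psi a b" .
    qed
    have Util_E: "Util t ** E j = P j ** Util t" if j: "j < n" for j
      using j by (simp add: P_def Util_eq matrix_mul_assoc[symmetric] UU Vb_comm)
    define g0 where "g0 = adj (Ubar t) ** Util t"
    have Util_unit: "unitary (Util t)" unfolding Util_eq using U_unitary Vb_unit by (rule unitary_mult)
    have EUb: "E j ** adj (Ubar t) = adj (Ubar t) ** P j" if j: "j < n" for j
      using Ubar_E[OF j] P_sa[OF j] bs.E_sa[OF j] by (metis adj_mult)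
    have g0G: "g0 \<in> blockG n d psi"
      unfolding bs.G_char
    proof (intro conjI allI impI)
      show "unitary g0" unfolding g0_def using Ubar_unit Util_unit by (intro unitary_mult unitary_adj)
    next
      fix j assume j: "j < n"
      show "g0 ** E j = E j ** g0"
        unfolding g0_def using Util_E[OF j] EUb[OF j] by (metis matrix_mul_assoc)
    qed
    have "Util t = Ubar t ** g0"
      using Ubar_unit unfolding g0_def unitary_def by (metis matrix_mul_assoc matrix_mul_lid)
    then show "Pi_quot n d psi (Util t) = W t"
      using bs.Pi_quot_shift[OF g0G] W_def by simp
  next
    fix t assume t: "t \<in> {0..T}"
    have Util_unit: "unitary (Util t)" unfolding Util_eq using U_unitary Vb_unit by (rule unitary_mult)
    have X: "adj (Util t) ** D t = cmscale (- \<i>) (adj (Vb t) ** (Cb t ** Vb t)) + cmscale \<i> (adj (Vb t) ** (H t ** Vb t))"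
      by (simp add: D_eq Util_eq adj_mult adjU matrix_add_ldistrib cmscale_mult_left cmscale_mult_right
          matrix_mul_assoc[symmetric] UU)
    have Cb_block: "cinner y' (Cb t *v y) = cinner y' (H t *v y)"
      if j: "j < n" and y: "E j *v y = y" and y': "E j *v y' = y'" for j y y'
    proof -
      have "Cb t *v y = (\<Sum>l<n. E l *v (H t *v (E l *v y)))"
        by (simp add: Cb_def sum_apply matrix_vector_mul_assoc matrix_mul_assoc)
      also have "\<dots> = (\<Sum>l<n. if l = j then E j *v (H t *v y) else 0)"
      proof (intro sum.cong refl)
        fix l assume l: "l \<in> {..<n}"
        show "E l *v (H t *v (E l *v y)) = (if l = j then E j *v (H t *v y) else 0)"
        proof (cases "l = j")
          case True then show ?thesis using y by simp
        next
          case False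
          have "E l *v y = (E l ** E j) *v y" using y by (metis matrix_vector_mul_assoc)
          also have "\<dots> = 0" using E_orth[of l j] l j False by simp
          finally show ?thesis using False by simp
        qed
      qed
      also have "\<dots> = E j *v (H t *v y)" using j by simp
      finally show ?thesis using y' bs.cinner_E[OF j] by metis
    qed
    have coef: "cinner (psi j m) ((matrix_inv (Util t) ** D t) *v psi j k) = 0"
      if j: "j < n" and mk: "m < d j" "k < d j" for j m k
    proof -
      have EV: "E j *v (Vb t *v psi j l) = Vb t *v psi j l" if "l < d j" for l
        using Vb_comm[OF j, of t] bs.E_psi[OF j that] by (metis matrix_vector_mul_assoc)
      have "cinner (psi j m) ((matrix_inv (Util t) ** D t) *v psi j k)
          = - \<i> * cinner (Vb t *v psi j m) (Cb t *v (Vb t *v psi j k))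
            + \<i> * cinner (Vb t *v psi j m) (H t *v (Vb t *v psi j k))"
        by (simp add: matrix_inv_unitary[OF Util_unit] X matrix_vector_mult_add_rdistrib cmscale_apply
            matrix_vector_mul_assoc[symmetric] cinner_add_right cinner_diff_right cinner_scale_right cinner_adj')
      also have "\<dots> = 0" using Cb_block[OF j EV[OF mk(2)] EV[OF mk(1)]] by simp
      finally show ?thesis .
    qed
    show "can_conn n d psi (Util t) (D t) = 0"
      unfolding can_conn_def by (intro sum.neutral ballI) (simp add: coef)
  qed
qed

end
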